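(* Let $T\colon \mathbb{N}\to\mathbb{N}$ be given by $T(n)=n/2$ for even $n$ and $T(n)=(3n+1)/2$ for odd $n$, with $k$-th iterate $T^{(k)}$. For each positive integer $k$ and each $r\in\{0,\ldots,2^k-1\}$ let $C_{k,r}\in\mathbb{Q}[X]$ denote the unique polynomial of degree at most one with $C_{k,r}(n)=T^{(k)}(n)$ for all positive integers $n\equiv r\pmod{2^k}$. Then for all positive integers $k,l$ and every $r\in\{0,\ldots,2^{k+l}-1\}$, writing $r'=r \bmod 2^l$ and $s=C_{l,r'}(r)\bmod 2^k$, one has the polynomial identity $$C_{k+l,r}(X)=C_{k,s}\bigl(C_{l,r'}(X)\bigr).$$
   Context: Here $a \bmod m$ denotes the least nonnegative residue of $a$ modulo $m$; note $C_{l,r'}(r)=T^{(l)}(r)$ is an integer (for $r=0$ interpret via the polynomial value, which is $0$). *)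

theory Defs
  imports "HOL-Computational_Algebra.Polynomial"
begin

definition collatzT :: "nat \<Rightarrow> nat" where
  "collatzT n = (if even n then n div 2 else (3 * n + 1) div 2)"

definition collatzC :: "nat \<Rightarrow> nat \<Rightarrow> rat poly" where
  "collatzC k r = (THE p. degree p \<le> 1 \<and>
     (\<forall>n::nat. 0 < n \<longrightarrow> n mod 2 ^ k = r \<longrightarrow>
        poly p (of_nat n) = of_nat ((collatzT ^^ k) n)))"

end

theory Submission
  imports Defs
begin

lemma Todd: "odd x \<Longrightarrow> 2 * collatzT x = 3*x+1"
  unfolding collatzT_def by simp

lemma Teven: "even x \<Longrightarrow> 2 * collatzT x = x"
  unfolding collatzT_def by simp

lemma core: "\<exists>a b. \<forall>j. 2^k * (collatzT^^k) (m + j*2^k) = 3^a*(m + j*2^k) + (b::nat)"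
proof (induction k)
  case 0
  show ?case by (rule exI[of _ 0], rule exI[of _ 0]) simp
next
  case (Suc k)
  then obtain a b where ab: "\<And>j. 2^k * (collatzT^^k) (m + j*2^k) = 3^a*(m + j*2^k) + b" by blast
  define t where "t = (collatzT^^k) m"
  have e: "(collatzT^^k)(m + j*2^(Suc k)) = t + 2*3^a*j" for j
  proof -
    have 1: "2^k * (collatzT^^k) (m + (2*j)*2^k) = 3^a*(m + (2*j)*2^k) + b" by (rule ab)
    have 2: "2^k * t = 3^a*m + b" using ab[of 0] by (simp add: t_def)
    have "2^k * (collatzT^^k) (m + j*2^(Suc k)) = 2^k * (t + 2*3^a*j)"
      using 1 2 by (simp add: algebra_simps)
    then show ?thesis by simp
  qed
  show ?case
  proof (cases "even t")
    case True
    show ?thesis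
    proof (rule exI[of _ a], rule exI[of _ b], rule allI)
      fix j
      have ev: "even (t + 2*3^a*j)" using True by simp
      have e': "(collatzT^^Suc k)(m + j*2^Suc k) = collatzT (t + 2*3^a*j)"
        using e[of j] by (simp only: funpow.simps comp_def)
      have "2^Suc k * (collatzT^^Suc k) (m + j*2^Suc k) = 2^k * (2 * collatzT (t + 2*3^a*j))"
        unfolding e' by simp
      also have "\<dots> = 2^k * (t + 2*3^a*j)" using Teven[OF ev] by simp
      also have "\<dots> = 2^k * (collatzT^^k) (m + (2*j)*2^k)" using e[of j] by (simp add: mult.assoc mult.left_commute)
      also have "\<dots> = 3^a*(m + (2*j)*2^k) + b" by (rule ab)
      finally show "2^Suc k * (collatzT^^Suc k) (m + j*2^Suc k) = 3^a*(m + j*2^Suc k) + b"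
        by (simp add: mult.assoc mult.left_commute)
    qed
  next
    case False
    show ?thesis
    proof (rule exI[of _ "Suc a"], rule exI[of _ "3*b + 2^k"], rule allI)
      fix j
      have od: "odd (t + 2*3^a*j)" using False by simp
      have e': "(collatzT^^Suc k)(m + j*2^Suc k) = collatzT (t + 2*3^a*j)"
        using e[of j] by (simp only: funpow.simps comp_def)
      have "2^Suc k * (collatzT^^Suc k) (m + j*2^Suc k) = 2^k * (2 * collatzT (t + 2*3^a*j))"
        unfolding e' by simp
      also have "\<dots> = 2^k * (3*(t + 2*3^a*j)+1)" using Todd[OF od] by simp
      also have "\<dots> = 3 * (2^k * (collatzT^^k) (m + (2*j)*2^k)) + 2^k" using e[of j]
        by (simp add: algebra_simps)
      also have "\<dots> = 3 * (3^a*(m + (2*j)*2^k) + b) + 2^k" by (simp add: ab)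
      finally show "2^Suc k * (collatzT^^Suc k) (m + j*2^Suc k) = 3^Suc a*(m + j*2^Suc k) + (3*b + 2^k)"
        by (simp add: algebra_simps)
    qed
  qed
qed

lemma deg1_zero:
  fixes p :: "rat poly"
  assumes "degree p \<le> 1" "poly p x = 0" "poly p y = 0" "x \<noteq> y"
  shows "p = 0"
proof -
  have pe: "poly p z = coeff p 0 + coeff p 1 * z" for z
  proof -
    have "poly p z = (\<Sum>i\<le>degree p. coeff p i * z ^ i)" by (rule poly_altdef)
    also have "\<dots> = (\<Sum>i\<le>1. coeff p i * z ^ i)"
      by (rule sum.mono_neutral_left) (use assms(1) le_degree in auto)
    finally show ?thesis by simp
  qed
  have "coeff p 1 * (x - y) = poly p x - poly p y" by (simp add: pe algebra_simps)
  then have "coeff p 1 * (x - y) = 0" using assms by simp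
  then have c1: "coeff p 1 = 0" using assms(4) by simp
  then have c0: "coeff p 0 = 0" using assms pe[of x] by simp
  show ?thesis
  proof (rule poly_eqI)
    fix n show "coeff p n = coeff 0 n"
      using c0 c1 assms(1) coeff_eq_0[of p n] by (cases n) (auto, case_tac nat, auto)
  qed
qed

lemma charC:
  assumes "r < 2^k"
  shows "degree (collatzC k r) \<le> 1 \<and>
     (\<forall>n::nat. n mod 2 ^ k = r \<longrightarrow> poly (collatzC k r) (of_nat n) = of_nat ((collatzT ^^ k) n))"
proof -
  obtain a b where ab: "\<And>j. 2^k * (collatzT^^k) (r + j*2^k) = 3^a*(r + j*2^k) + (b::nat)"
    using core by blast
  define P :: "rat poly" where "P = [: of_nat b / 2^k, 3^a / 2^k :]"
  have degP: "degree P \<le> 1" by (simp add: P_def)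
  have valP: "poly P (of_nat n) = of_nat ((collatzT ^^ k) n)" if "n mod 2^k = r" for n
  proof -
    have n: "n = r + (n div 2^k) * 2^k" using that by (metis div_mult_mod_eq add.commute)
    have "2^k * (collatzT^^k) n = 3^a * n + b" using ab[of "n div 2^k"] n by metis
    then have "(of_nat (2^k * (collatzT^^k) n) :: rat) = of_nat (3^a * n + b)" by simp
    then have "(2::rat)^k * of_nat ((collatzT^^k) n) = 3^a * of_nat n + of_nat b" by simp
    then show ?thesis by (simp add: P_def field_simps)
  qed
  have uniq: "q = P" if "degree q \<le> 1 \<and> (\<forall>n::nat. 0 < n \<longrightarrow> n mod 2 ^ k = r \<longrightarrow>
        poly q (of_nat n) = of_nat ((collatzT ^^ k) n))" for q
  proof -
    have "q - P = 0"
    proof (rule deg1_zero[of _ "of_nat (r + 2^k)" "of_nat (r + 2*2^k)"])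
      show "degree (q - P) \<le> 1" using that degP degree_diff_le by blast
      have m1: "(r + 2^k) mod 2^k = r" "(r + 2*2^k) mod 2^k = r" using assms by simp_all
      have p1: "0 < r + 2^k" "0 < r + 2*2^k" by simp_all
      have q1: "poly q (of_nat (r + 2^k)) = of_nat ((collatzT ^^ k) (r + 2^k))"
        by (rule that[THEN conjunct2, rule_format, OF p1(1) m1(1)])
      have q2: "poly q (of_nat (r + 2*2^k)) = of_nat ((collatzT ^^ k) (r + 2*2^k))"
        by (rule that[THEN conjunct2, rule_format, OF p1(2) m1(2)])
      show "poly (q - P) (of_nat (r + 2 ^ k)) = 0" using q1 valP[OF m1(1)] by (simp only: poly_diff diff_self)
      show "poly (q - P) (of_nat (r + 2 * 2 ^ k)) = 0" using q2 valP[OF m1(2)] by (simp only: poly_diff diff_self)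
      show "(of_nat (r + 2 ^ k)::rat) \<noteq> of_nat (r + 2 * 2 ^ k)" by simp
    qed
    then show ?thesis by simp
  qed
  have "collatzC k r = P" unfolding collatzC_def
    by (rule the_equality) (use degP valP uniq in auto)
  then show ?thesis using degP valP by simp
qed

theorem mainTheorem2:
  fixes k l r :: nat
  assumes "0 < k" and "0 < l" and "r < 2 ^ (k + l)"
  shows "collatzC (k + l) r =
    pcompose (collatzC k (nat (\<lfloor>poly (collatzC l (r mod 2 ^ l)) (of_nat r)\<rfloor> mod 2 ^ k)))
             (collatzC l (r mod 2 ^ l))"
proof -
  define p where "p = collatzC l (r mod 2 ^ l)"
  have cp: "degree p \<le> 1 \<and> (\<forall>n::nat. n mod 2 ^ l = r mod 2^l \<longrightarrow> poly p (of_nat n) = of_nat ((collatzT ^^ l) n))"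
    unfolding p_def by (rule charC) simp
  have pr: "poly p (of_nat r) = of_nat ((collatzT ^^ l) r)" using cp by simp
  define s where "s = (collatzT ^^ l) r mod 2^k"
  have s_eq: "nat (\<lfloor>poly p (of_nat r)\<rfloor> mod 2 ^ k) = s"
    unfolding pr s_def by (simp add: nat_mod_distrib nat_power_eq)
  define q where "q = collatzC k s"
  have cq: "degree q \<le> 1 \<and> (\<forall>n::nat. n mod 2 ^ k = s \<longrightarrow> poly q (of_nat n) = of_nat ((collatzT ^^ k) n))"
    unfolding q_def by (rule charC) (simp add: s_def)
  obtain a b where ab: "\<And>j. 2^l * (collatzT^^l) (r + j*2^l) = 3^a*(r + j*2^l) + (b::nat)"
    using core by blast
  have cong: "(collatzT^^l) n mod 2^k = s" if "n mod 2^(k+l) = r" for n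
  proof -
    define i where "i = n div 2^(k+l)"
    have n: "n = r + (i * 2^k) * 2^l"
    proof -
      have "n = n mod 2^(k+l) + i * 2^(k+l)" unfolding i_def by (metis mod_div_mult_eq add.commute)
      then show ?thesis using that by (simp add: power_add mult.assoc mult.commute)
    qed
    have 1: "2^l * (collatzT^^l) n = 3^a*(r + (i*2^k)*2^l) + b" using ab[of "i*2^k"] n by simp
    have 2: "2^l * (collatzT^^l) r = 3^a*r + b" using ab[of 0] by simp
    have "2^l * (collatzT^^l) n = 2^l * ((collatzT^^l) r + 3^a*i*2^k)" using 1 2 by (simp add: algebra_simps)
    then have "(collatzT^^l) n = (collatzT^^l) r + (3^a*i)*2^k" by simp
    then show ?thesis by (simp add: s_def)
  qed
  have dvdm: "(2::nat)^l dvd 2^(k+l)" by (simp add: le_imp_power_dvd)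
  have "collatzC (k + l) r = pcompose q p" unfolding collatzC_def
  proof (rule the_equality)
    show "degree (pcompose q p) \<le> 1 \<and> (\<forall>n. 0 < n \<longrightarrow> n mod 2 ^ (k + l) = r \<longrightarrow>
        poly (pcompose q p) (of_nat n) = of_nat ((collatzT ^^ (k + l)) n))"
    proof (intro conjI allI impI)
      show "degree (pcompose q p) \<le> 1" using cp cq degree_pcompose[of q p] mult_le_mono[of "degree q" 1 "degree p" 1]
        by simp
      fix n :: nat assume "n mod 2 ^ (k + l) = r"
      moreover have "n mod 2^l = r mod 2^l" using calculation
        by (metis mod_mod_cancel dvdm)
      ultimately show "poly (pcompose q p) (of_nat n) = of_nat ((collatzT ^^ (k + l)) n)"
        using cp cq cong by (simp add: poly_pcompose funpow_add)
    qed
    fix q' :: "rat poly" assume h: "degree q' \<le> 1 \<and> (\<forall>n. 0 < n \<longrightarrow> n mod 2 ^ (k + l) = r \<longrightarrow>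
        poly q' (of_nat n) = of_nat ((collatzT ^^ (k + l)) n))"
    have "q' - pcompose q p = 0"
    proof (rule deg1_zero[of _ "of_nat (r + 2^(k+l))" "of_nat (r + 2*2^(k+l))"])
      have d: "degree (pcompose q p) \<le> 1" using cp cq degree_pcompose[of q p] mult_le_mono[of "degree q" 1 "degree p" 1]
        by simp
      show "degree (q' - pcompose q p) \<le> 1" using h d degree_diff_le by blast
      have v: "poly (pcompose q p) (of_nat n) = of_nat ((collatzT ^^ (k + l)) n)"
        if "n mod 2 ^ (k + l) = r" for n
      proof -
        have "n mod 2^l = r mod 2^l" using that
          by (metis mod_mod_cancel dvdm)
        then show ?thesis using that cp cq cong by (simp add: poly_pcompose funpow_add)
      qed
      have m1: "(r + 2^(k+l)) mod 2^(k+l) = r" "(r + 2*2^(k+l)) mod 2^(k+l) = r" using assms by simp_all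
      have p1: "0 < r + 2^(k+l)" "0 < r + 2*2^(k+l)" by simp_all
      have q1: "poly q' (of_nat (r + 2^(k+l))) = of_nat ((collatzT ^^ (k+l)) (r + 2^(k+l)))"
        by (rule h[THEN conjunct2, rule_format, OF p1(1) m1(1)])
      have q2: "poly q' (of_nat (r + 2*2^(k+l))) = of_nat ((collatzT ^^ (k+l)) (r + 2*2^(k+l)))"
        by (rule h[THEN conjunct2, rule_format, OF p1(2) m1(2)])
      show "poly (q' - pcompose q p) (of_nat (r + 2 ^ (k+l))) = 0"
        using q1 v[OF m1(1)] by (simp only: poly_diff diff_self)
      show "poly (q' - pcompose q p) (of_nat (r + 2 * 2 ^ (k+l))) = 0"
        using q2 v[OF m1(2)] by (simp only: poly_diff diff_self)
      show "(of_nat (r + 2 ^ (k+l))::rat) \<noteq> of_nat (r + 2 * 2 ^ (k+l))" by simp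
    qed
    then show "q' = pcompose q p" by simp
  qed
  then show ?thesis using s_eq unfolding p_def q_def by simp
qed

end
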